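(* Consider the setting in the context with $P_i=\tau_iI_n$, $Q_i=\zeta_iI_n$, $\rho>0$, $0<\gamma<2$. If for every $i\in\mathcal{V}$ $$\zeta_i>\frac{C_i}{m}(C_i+m),\qquad \tau_i>\max\Big\{\rho d_i+4(N-1)\rho\sqrt{n},\ \rho\Big(\frac{N}{2-\gamma}-1\Big)d_i\Big\},$$ then $\bm{G}_1^{\dagger}\succ0$, $\bm{G}_2\succ\bm{G}_3$, and there exist $\epsilon_i\in(0,1)$ with $\sum_i\epsilon_i<2-\gamma$ and $\tau_i>\rho(\frac1{\epsilon_i}-1)d_i$ for all $i$.
   Context: Let $\mathcal{G}=(\mathcal{V},\mathcal{E})$ be a connected undirected graph with $\mathcal{V}=\{1,\dots,N\}$, $N\ge2$, and let $d_i$ be the degree of $i$. The matrix $\bm{A}\in\mathbb{R}^{|\mathcal{E}|n\times Nn}$ has one block row per edge $\{i,j\}$ ($i<j$) with $I_n$ in block column $i$, $-I_n$ in block column $j$, zeros elsewhere; $A_i$ is its $i$-th block column, so $A_i^TA_i=d_iI_n$ and, for $i\ne j$, $A_i^TA_j=-I_n$ if $\{i,j\}\in\mathcal{E}$ and $0$ otherwise. Constants: $C_i>0$ (Lipschitz constants of the gradients of local losses $f_i$), $\mu_2>0$ and $m$ with $0<m\le\mu_2$. Matrices: $\bm{G}_1=\mathrm{blkdiag}(\rho d_iI_n+P_i)_i$, $\bm{G}_1^{\dagger}=\bm{G}_1-\rho\bm{A}^T\bm{A}$, $\bm{G}_2=\mathrm{blkdiag}(Q_i)_i$, $\bm{G}_3=\mathrm{blkdiag}\big(\frac{C_i}{m}(C_i+m)I_n\big)_i$.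 *)

theory Defs
  imports Main "HOL-Library.Extended_Real" Complex_Main
begin

definition verts :: "nat \<Rightarrow> nat set" where
  "verts N = {1..N}"

definition undirected_graph :: "nat \<Rightarrow> (nat \<Rightarrow> nat \<Rightarrow> bool) \<Rightarrow> bool" where
  "undirected_graph N E \<longleftrightarrow>
     (\<forall>i j. E i j \<longrightarrow> i \<in> verts N \<and> j \<in> verts N) \<and>
     (\<forall>i j. E i j \<longrightarrow> E j i) \<and> (\<forall>i. \<not> E i i)"

definition connected_graph :: "nat \<Rightarrow> (nat \<Rightarrow> nat \<Rightarrow> bool) \<Rightarrow> bool" where
  "connected_graph N E \<longleftrightarrow> (\<forall>i\<in>verts N. \<forall>j\<in>verts N. E\<^sup>*\<^sup>* i j)"

definition deg :: "nat \<Rightarrow> (nat \<Rightarrow> nat \<Rightarrow> bool) \<Rightarrow> nat \<Rightarrow> nat" where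
  "deg N E i = card {j \<in> verts N. E i j}"

definition edges :: "nat \<Rightarrow> (nat \<Rightarrow> nat \<Rightarrow> bool) \<Rightarrow> (nat \<times> nat) set" where
  "edges N E = {(i,j). i \<in> verts N \<and> j \<in> verts N \<and> i < j \<and> E i j}"

(* Matrices are functions of (row index, column index). Column indices of the stacked
   vectors in R^{Nn}: (i,k) with i \<in> V (block) and k < n (entry in the block).
   Row indices of A: ((i,j),k) with (i,j) an edge and k < n. *)
definition col_idx :: "nat \<Rightarrow> nat \<Rightarrow> (nat \<times> nat) set" where
  "col_idx N n = verts N \<times> {0..<n}"

definition row_idx :: "nat \<Rightarrow> (nat \<Rightarrow> nat \<Rightarrow> bool) \<Rightarrow> nat \<Rightarrow> ((nat \<times> nat) \<times> nat) set" where
  "row_idx N E n = edges N E \<times> {0..<n}"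

(* the incidence matrix A: block row of edge (i,j) has I_n in block column i, -I_n in block column j *)
definition Amat :: "((nat \<times> nat) \<times> nat) \<Rightarrow> (nat \<times> nat) \<Rightarrow> real" where
  "Amat r c = (case r of ((i,j),k) \<Rightarrow> case c of (l,k') \<Rightarrow>
      if k = k' then (if l = i then 1 else if l = j then -1 else 0) else 0)"

definition AtA :: "nat \<Rightarrow> (nat \<Rightarrow> nat \<Rightarrow> bool) \<Rightarrow> nat \<Rightarrow> (nat \<times> nat) \<Rightarrow> (nat \<times> nat) \<Rightarrow> real" where
  "AtA N E n p q = (\<Sum>r\<in>row_idx N E n. Amat r p * Amat r q)"

definition idmat :: "nat \<Rightarrow> nat \<Rightarrow> real" where
  "idmat k l = (if k = l then 1 else 0)"

definition blkdiag :: "(nat \<Rightarrow> nat \<Rightarrow> nat \<Rightarrow> real) \<Rightarrow> (nat \<times> nat) \<Rightarrow> (nat \<times> nat) \<Rightarrow> real" where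
  "blkdiag B p q = (case p of (i,k) \<Rightarrow> case q of (j,l) \<Rightarrow> if i = j then B i k l else 0)"

definition G1 :: "nat \<Rightarrow> (nat \<Rightarrow> nat \<Rightarrow> bool) \<Rightarrow> real \<Rightarrow> (nat \<Rightarrow> nat \<Rightarrow> nat \<Rightarrow> real)
                  \<Rightarrow> (nat \<times> nat) \<Rightarrow> (nat \<times> nat) \<Rightarrow> real" where
  "G1 N E \<rho> P = blkdiag (\<lambda>i k l. \<rho> * real (deg N E i) * idmat k l + P i k l)"

definition G1dag :: "nat \<Rightarrow> (nat \<Rightarrow> nat \<Rightarrow> bool) \<Rightarrow> nat \<Rightarrow> real \<Rightarrow> (nat \<Rightarrow> nat \<Rightarrow> nat \<Rightarrow> real)
                  \<Rightarrow> (nat \<times> nat) \<Rightarrow> (nat \<times> nat) \<Rightarrow> real" where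
  "G1dag N E n \<rho> P p q = G1 N E \<rho> P p q - \<rho> * AtA N E n p q"

definition G2 :: "(nat \<Rightarrow> nat \<Rightarrow> nat \<Rightarrow> real) \<Rightarrow> (nat \<times> nat) \<Rightarrow> (nat \<times> nat) \<Rightarrow> real" where
  "G2 Q = blkdiag Q"

definition G3 :: "(nat \<Rightarrow> real) \<Rightarrow> real \<Rightarrow> (nat \<times> nat) \<Rightarrow> (nat \<times> nat) \<Rightarrow> real" where
  "G3 C m = blkdiag (\<lambda>i k l. C i / m * (C i + m) * idmat k l)"

definition pos_def :: "'a set \<Rightarrow> ('a \<Rightarrow> 'a \<Rightarrow> real) \<Rightarrow> bool" where
  "pos_def S M \<longleftrightarrow> (\<forall>p\<in>S. \<forall>q\<in>S. M p q = M q p) \<and>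
     (\<forall>x. (\<exists>p\<in>S. x p \<noteq> 0) \<longrightarrow> (\<Sum>p\<in>S. \<Sum>q\<in>S. x p * M p q * x q) > 0)"

definition loewner_gt :: "'a set \<Rightarrow> ('a \<Rightarrow> 'a \<Rightarrow> real) \<Rightarrow> ('a \<Rightarrow> 'a \<Rightarrow> real) \<Rightarrow> bool" where
  "loewner_gt S M M' \<longleftrightarrow> pos_def S (\<lambda>p q. M p q - M' p q)"

end

theory Submission
  imports Defs
begin

lemma fin_verts[simp]: "finite (verts N)" by (simp add: verts_def)
lemma fin_col[simp]: "finite (col_idx N n)" by (simp add: col_idx_def)
lemma fin_edges[simp]: "finite (edges N E)"
proof -
  have "edges N E \<subseteq> verts N \<times> verts N" by (auto simp: edges_def)
  then show ?thesis by (rule finite_subset) simp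
qed

lemma blk_quad:
  assumes "finite S"
  shows "(\<Sum>p\<in>S. \<Sum>q\<in>S. x p * blkdiag (\<lambda>i k l. w i * idmat k l) p q * x q)
       = (\<Sum>p\<in>S. w (fst p) * (x p)\<^sup>2)"
proof (rule sum.cong[OF refl])
  fix p assume p: "p \<in> S"
  have "(\<Sum>q\<in>S. x p * blkdiag (\<lambda>i k l. w i * idmat k l) p q * x q)
      = (\<Sum>q\<in>S. if q = p then w (fst p) * (x p)\<^sup>2 else 0)"
    by (rule sum.cong[OF refl]) (auto simp: blkdiag_def idmat_def power2_eq_square split: prod.splits)
  also have "\<dots> = w (fst p) * (x p)\<^sup>2" using assms p by (simp add: sum.delta')
  finally show "(\<Sum>q\<in>S. x p * blkdiag (\<lambda>i k l. w i * idmat k l) p q * x q) = w (fst p) * (x p)\<^sup>2" .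
qed

lemma blk_sym: "blkdiag (\<lambda>i k l. w i * idmat k l) p q = blkdiag (\<lambda>i k l. w i * idmat k l) q p"
  by (auto simp: blkdiag_def idmat_def split: prod.splits)

lemma blk_pd:
  assumes "\<forall>i\<in>verts N. w i > 0"
  shows "pos_def (col_idx N n) (blkdiag (\<lambda>i k l. w i * idmat k l))"
  unfolding pos_def_def
proof (intro conjI ballI allI impI)
  fix p q show "blkdiag (\<lambda>i k l. w i * idmat k l) p q = blkdiag (\<lambda>i k l. w i * idmat k l) q p"
    by (rule blk_sym)
next
  fix x :: "nat \<times> nat \<Rightarrow> real" assume "\<exists>p\<in>col_idx N n. x p \<noteq> 0"
  then obtain p0 where p0: "p0 \<in> col_idx N n" "x p0 \<noteq> 0" by blast
  have pos: "\<And>p. p \<in> col_idx N n \<Longrightarrow> w (fst p) > 0" using assms by (auto simp: col_idx_def)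
  have "0 < w (fst p0) * (x p0)\<^sup>2" using pos[OF p0(1)] p0(2) by simp
  also have "\<dots> \<le> (\<Sum>p\<in>col_idx N n. w (fst p) * (x p)\<^sup>2)"
  proof (rule member_le_sum)
    fix p assume "p \<in> col_idx N n - {p0}"
    then have "w (fst p) > 0" using pos by blast
    then show "0 \<le> w (fst p) * (x p)\<^sup>2" by simp
  qed (use p0 in auto)
  finally show "0 < (\<Sum>p\<in>col_idx N n. \<Sum>q\<in>col_idx N n. x p * blkdiag (\<lambda>i k l. w i * idmat k l) p q * x q)"
    by (simp add: blk_quad)
qed

lemma Arow:
  assumes "(i,j) \<in> edges N E" "k < n"
  shows "(\<Sum>p\<in>col_idx N n. Amat ((i,j),k) p * x p) = x (i,k) - x (j,k)"
proof -
  have ij: "i \<noteq> j" "(i,k) \<in> col_idx N n" "(j,k) \<in> col_idx N n"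
    using assms by (auto simp: edges_def col_idx_def)
  have "(\<Sum>p\<in>col_idx N n. Amat ((i,j),k) p * x p)
     = (\<Sum>p\<in>col_idx N n. (if p = (i,k) then x p else 0) - (if p = (j,k) then x p else 0))"
    by (rule sum.cong[OF refl]) (use ij in \<open>auto simp: Amat_def split: prod.splits\<close>)
  also have "\<dots> = x (i,k) - x (j,k)" using ij by (simp add: sum_subtractf sum.delta')
  finally show ?thesis .
qed

lemma AtA_quad:
  "(\<Sum>p\<in>col_idx N n. \<Sum>q\<in>col_idx N n. x p * AtA N E n p q * x q)
   = (\<Sum>e\<in>edges N E. \<Sum>k<n. (x (fst e, k) - x (snd e, k))\<^sup>2)"
proof -
  have "(\<Sum>p\<in>col_idx N n. \<Sum>q\<in>col_idx N n. x p * AtA N E n p q * x q)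
     = (\<Sum>p\<in>col_idx N n. \<Sum>q\<in>col_idx N n. \<Sum>r\<in>row_idx N E n. (Amat r p * x p) * (Amat r q * x q))"
    by (simp add: AtA_def sum_distrib_left sum_distrib_right mult_ac)
  also have "\<dots> = (\<Sum>r\<in>row_idx N E n. (\<Sum>p\<in>col_idx N n. Amat r p * x p) * (\<Sum>q\<in>col_idx N n. Amat r q * x q))"
  proof -
    have "(\<Sum>p\<in>col_idx N n. \<Sum>q\<in>col_idx N n. \<Sum>r\<in>row_idx N E n. (Amat r p * x p) * (Amat r q * x q))
       = (\<Sum>p\<in>col_idx N n. \<Sum>r\<in>row_idx N E n. \<Sum>q\<in>col_idx N n. (Amat r p * x p) * (Amat r q * x q))"
      by (rule sum.cong[OF refl], rule sum.swap)
    also have "\<dots> = (\<Sum>r\<in>row_idx N E n. \<Sum>p\<in>col_idx N n. \<Sum>q\<in>col_idx N n. (Amat r p * x p) * (Amat r q * x q))"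
      by (rule sum.swap)
    also have "\<dots> = (\<Sum>r\<in>row_idx N E n. (\<Sum>p\<in>col_idx N n. Amat r p * x p) * (\<Sum>q\<in>col_idx N n. Amat r q * x q))"
      by (simp add: sum_product)
    finally show ?thesis .
  qed
  also have "\<dots> = (\<Sum>r\<in>row_idx N E n. (x (fst (fst r), snd r) - x (snd (fst r), snd r))\<^sup>2)"
    by (rule sum.cong[OF refl]) (auto simp: row_idx_def Arow power2_eq_square)
  also have "\<dots> = (\<Sum>e\<in>edges N E. \<Sum>k<n. (x (fst e, k) - x (snd e, k))\<^sup>2)"
    unfolding row_idx_def by (simp add: sum.cartesian_product lessThan_atLeast0 case_prod_beta)
  finally show ?thesis .
qed

lemma pair_bound:
  fixes a :: "nat \<Rightarrow> real"
  assumes "finite V"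
  shows "(\<Sum>i\<in>V. \<Sum>j\<in>V. (a i - a j)\<^sup>2) \<le> 2 * real (card V) * (\<Sum>i\<in>V. (a i)\<^sup>2)"
proof -
  have "(\<Sum>i\<in>V. \<Sum>j\<in>V. (a i - a j)\<^sup>2)
      = (\<Sum>i\<in>V. \<Sum>j\<in>V. (a i)\<^sup>2 + (a j)\<^sup>2 - 2 * (a i * a j))"
    by (simp add: power2_diff mult.assoc)
  also have "\<dots> = 2 * real (card V) * (\<Sum>i\<in>V. (a i)\<^sup>2) - 2 * (\<Sum>i\<in>V. a i)\<^sup>2"
    by (simp add: sum_subtractf sum.distrib sum_distrib_left sum_distrib_right power2_eq_square
          sum_product algebra_simps)
  also have "\<dots> \<le> 2 * real (card V) * (\<Sum>i\<in>V. (a i)\<^sup>2)" by simp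
  finally show ?thesis .
qed

lemma edge_bound:
  "(\<Sum>e\<in>edges N E. \<Sum>k<n. (x (fst e, k) - x (snd e, k))\<^sup>2)
    \<le> 2 * real N * (\<Sum>p\<in>col_idx N n. (x p)\<^sup>2)"
proof -
  have sub: "edges N E \<subseteq> verts N \<times> verts N" by (auto simp: edges_def)
  have "(\<Sum>e\<in>edges N E. \<Sum>k<n. (x (fst e, k) - x (snd e, k))\<^sup>2)
     \<le> (\<Sum>e\<in>verts N \<times> verts N. \<Sum>k<n. (x (fst e, k) - x (snd e, k))\<^sup>2)"
    by (rule sum_mono2) (use sub in \<open>auto intro: sum_nonneg\<close>)
  also have "\<dots> = (\<Sum>i\<in>verts N. \<Sum>j\<in>verts N. \<Sum>k<n. (x (i, k) - x (j, k))\<^sup>2)"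
    by (simp only: sum.cartesian_product') simp
  also have "\<dots> = (\<Sum>k<n. \<Sum>i\<in>verts N. \<Sum>j\<in>verts N. (x (i, k) - x (j, k))\<^sup>2)"
  proof -
    have "(\<Sum>i\<in>verts N. \<Sum>j\<in>verts N. \<Sum>k<n. (x (i, k) - x (j, k))\<^sup>2)
        = (\<Sum>i\<in>verts N. \<Sum>k<n. \<Sum>j\<in>verts N. (x (i, k) - x (j, k))\<^sup>2)"
      by (rule sum.cong[OF refl], rule sum.swap)
    also have "\<dots> = (\<Sum>k<n. \<Sum>i\<in>verts N. \<Sum>j\<in>verts N. (x (i, k) - x (j, k))\<^sup>2)"
      by (rule sum.swap)
    finally show ?thesis .
  qed
  also have "\<dots> \<le> (\<Sum>k<n. 2 * real (card (verts N)) * (\<Sum>i\<in>verts N. (x (i, k))\<^sup>2))"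
    by (rule sum_mono, rule pair_bound) simp
  also have "\<dots> = 2 * real N * (\<Sum>k<n. \<Sum>i\<in>verts N. (x (i, k))\<^sup>2)"
    by (simp add: verts_def sum_distrib_left)
  also have "(\<Sum>k<n. \<Sum>i\<in>verts N. (x (i, k))\<^sup>2) = (\<Sum>p\<in>col_idx N n. (x p)\<^sup>2)"
  proof -
    have "(\<Sum>k<n. \<Sum>i\<in>verts N. (x (i, k))\<^sup>2) = (\<Sum>i\<in>verts N. \<Sum>k<n. (x (i, k))\<^sup>2)"
      by (rule sum.swap)
    also have "\<dots> = (\<Sum>p\<in>col_idx N n. (x p)\<^sup>2)"
      by (simp add: col_idx_def sum.cartesian_product lessThan_atLeast0 case_prod_beta)
    finally show ?thesis .
  qed
  finally show ?thesis .
qed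

lemma G1dag_eq:
  "G1dag N E n \<rho> (\<lambda>i k l. \<tau> i * idmat k l) p q
   = blkdiag (\<lambda>i k l. (\<rho> * real (deg N E i) + \<tau> i) * idmat k l) p q - \<rho> * AtA N E n p q"
  by (simp add: G1dag_def G1_def blkdiag_def algebra_simps split: prod.splits)

lemma avg_lt: "x = (a + t) / 2 \<Longrightarrow> a < t \<Longrightarrow> x < (t::real)" by simp
lemma avg_gt: "a < t \<Longrightarrow> x = (a + t) / 2 \<Longrightarrow> a < (x::real)" by simp

theorem proposition2:
  fixes N n :: nat and E :: "nat \<Rightarrow> nat \<Rightarrow> bool"
    and C \<tau> \<zeta> :: "nat \<Rightarrow> real" and \<mu>2 m \<rho> \<gamma> :: real
  assumes N2: "N \<ge> 2" and n1: "n \<ge> 1"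
    and graph: "undirected_graph N E" and conn: "connected_graph N E"
    and Cpos: "\<forall>i\<in>verts N. C i > 0"
    and mu2: "\<mu>2 > 0" and m: "0 < m" "m \<le> \<mu>2"
    and rho: "\<rho> > 0" and gam: "0 < \<gamma>" "\<gamma> < 2"
    and zeta: "\<forall>i\<in>verts N. \<zeta> i > C i / m * (C i + m)"
    and tau: "\<forall>i\<in>verts N. \<tau> i > max (\<rho> * real (deg N E i) + 4 * (real N - 1) * \<rho> * sqrt (real n))
                                         (\<rho> * (real N / (2 - \<gamma>) - 1) * real (deg N E i))"
  shows "pos_def (col_idx N n) (G1dag N E n \<rho> (\<lambda>i k l. \<tau> i * idmat k l))
       \<and> loewner_gt (col_idx N n) (G2 (\<lambda>i k l. \<zeta> i * idmat k l)) (G3 C m)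
       \<and> (\<exists>\<epsilon> :: nat \<Rightarrow> real. (\<forall>i\<in>verts N. 0 < \<epsilon> i \<and> \<epsilon> i < 1)
             \<and> (\<Sum>i\<in>verts N. \<epsilon> i) < 2 - \<gamma>
             \<and> (\<forall>i\<in>verts N. \<tau> i > \<rho> * (1 / \<epsilon> i - 1) * real (deg N E i)))"
proof (intro conjI)
  have sq: "sqrt (real n) \<ge> 1" using n1 by simp
  have tau1: "\<tau> i > \<rho> * real (deg N E i) + 4 * (real N - 1) * \<rho>" if "i \<in> verts N" for i
  proof -
    have "4 * (real N - 1) * \<rho> * 1 \<le> 4 * (real N - 1) * \<rho> * sqrt (real n)"
      by (rule mult_left_mono[OF sq]) (use N2 rho in simp)
    moreover have "\<tau> i > \<rho> * real (deg N E i) + 4 * (real N - 1) * \<rho> * sqrt (real n)"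
      using tau that by simp
    ultimately show ?thesis by linarith
  qed
  have tau2: "\<tau> i > \<rho> * (real N / (2 - \<gamma>) - 1) * real (deg N E i)" if "i \<in> verts N" for i
    using tau that by simp
  have taupos: "\<tau> i > 0" if "i \<in> verts N" for i
  proof -
    have "\<rho> * real (deg N E i) \<ge> 0" using rho by simp
    moreover have "4 * (real N - 1) * \<rho> > 0" using N2 rho by simp
    ultimately show ?thesis using tau1[OF that] by linarith
  qed
  show "pos_def (col_idx N n) (G1dag N E n \<rho> (\<lambda>i k l. \<tau> i * idmat k l))"
    unfolding pos_def_def
  proof (intro conjI ballI allI impI)
    fix p q show "G1dag N E n \<rho> (\<lambda>i k l. \<tau> i * idmat k l) p q = G1dag N E n \<rho> (\<lambda>i k l. \<tau> i * idmat k l) q p"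
      unfolding G1dag_eq by (subst blk_sym) (simp add: AtA_def mult.commute)
  next
    fix x :: "nat \<times> nat \<Rightarrow> real" assume "\<exists>p\<in>col_idx N n. x p \<noteq> 0"
    then obtain p0 where p0: "p0 \<in> col_idx N n" "x p0 \<noteq> 0" by blast
    define w where "w i = \<rho> * real (deg N E i) + \<tau> i - 2 * real N * \<rho>" for i
    have wpos: "w (fst p) > 0" if "p \<in> col_idx N n" for p
    proof -
      have i: "fst p \<in> verts N" using that by (auto simp: col_idx_def)
      have "2 * real N * \<rho> \<le> 4 * (real N - 1) * \<rho>" using N2 rho by (simp add: algebra_simps)
      then show ?thesis using tau1[OF i] rho unfolding w_def
        by (smt (verit) mult_nonneg_nonneg of_nat_0_le_iff)
    qed
    have eq1: "(\<Sum>p\<in>col_idx N n. \<Sum>q\<in>col_idx N n. x p * G1dag N E n \<rho> (\<lambda>i k l. \<tau> i * idmat k l) p q * x q)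
       = (\<Sum>p\<in>col_idx N n. \<Sum>q\<in>col_idx N n.
            x p * blkdiag (\<lambda>i k l. (\<rho> * real (deg N E i) + \<tau> i) * idmat k l) p q * x q
            - \<rho> * (x p * AtA N E n p q * x q))"
      unfolding G1dag_eq by (simp add: algebra_simps)
    also have "\<dots> = (\<Sum>p\<in>col_idx N n. (\<rho> * real (deg N E (fst p)) + \<tau> (fst p)) * (x p)\<^sup>2)
        - \<rho> * (\<Sum>e\<in>edges N E. \<Sum>k<n. (x (fst e, k) - x (snd e, k))\<^sup>2)"
      by (simp add: sum_subtractf sum_distrib_left[symmetric] blk_quad AtA_quad)
    finally have eq: "(\<Sum>p\<in>col_idx N n. \<Sum>q\<in>col_idx N n. x p * G1dag N E n \<rho> (\<lambda>i k l. \<tau> i * idmat k l) p q * x q)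
       = (\<Sum>p\<in>col_idx N n. (\<rho> * real (deg N E (fst p)) + \<tau> (fst p)) * (x p)\<^sup>2)
        - \<rho> * (\<Sum>e\<in>edges N E. \<Sum>k<n. (x (fst e, k) - x (snd e, k))\<^sup>2)" .
    have le: "\<rho> * (\<Sum>e\<in>edges N E. \<Sum>k<n. (x (fst e, k) - x (snd e, k))\<^sup>2)
        \<le> \<rho> * (2 * real N * (\<Sum>p\<in>col_idx N n. (x p)\<^sup>2))"
      using edge_bound[where x=x and N=N and E=E and n=n] rho by (simp add: mult_left_mono)
    have eq2: "(\<Sum>p\<in>col_idx N n. (\<rho> * real (deg N E (fst p)) + \<tau> (fst p)) * (x p)\<^sup>2)
        - \<rho> * (2 * real N * (\<Sum>p\<in>col_idx N n. (x p)\<^sup>2)) = (\<Sum>p\<in>col_idx N n. w (fst p) * (x p)\<^sup>2)"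
      by (simp add: w_def sum_subtractf sum_distrib_left algebra_simps)
    have gt: "(\<Sum>p\<in>col_idx N n. w (fst p) * (x p)\<^sup>2) > 0"
    proof -
      have "0 < w (fst p0) * (x p0)\<^sup>2" using wpos[OF p0(1)] p0(2) by simp
      also have "\<dots> \<le> (\<Sum>p\<in>col_idx N n. w (fst p) * (x p)\<^sup>2)"
      proof (rule member_le_sum)
        fix p assume "p \<in> col_idx N n - {p0}"
        then have "w (fst p) > 0" using wpos by blast
        then show "0 \<le> w (fst p) * (x p)\<^sup>2" by simp
      qed (use p0 in auto)
      finally show ?thesis .
    qed
    show "0 < (\<Sum>p\<in>col_idx N n. \<Sum>q\<in>col_idx N n. x p * G1dag N E n \<rho> (\<lambda>i k l. \<tau> i * idmat k l) p q * x q)"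
      unfolding eq using le eq2 gt by linarith
  qed
  show "loewner_gt (col_idx N n) (G2 (\<lambda>i k l. \<zeta> i * idmat k l)) (G3 C m)"
  proof -
    have eq: "(\<lambda>p q. G2 (\<lambda>i k l. \<zeta> i * idmat k l) p q - G3 C m p q)
        = blkdiag (\<lambda>i k l. (\<zeta> i - C i / m * (C i + m)) * idmat k l)"
      by (auto simp: G2_def G3_def blkdiag_def algebra_simps fun_eq_iff split: prod.splits)
    show ?thesis unfolding loewner_gt_def eq
      by (rule blk_pd) (use zeta in auto)
  qed
  define B where "B = real N / (2 - \<gamma>) - 1"
  have g2: "2 - \<gamma> > 0" using gam by simp
  have Ngt: "real N > 2 - \<gamma>" using N2 gam by simp
  have Bpos: "B > 0" unfolding B_def using Ngt g2 by (simp add: field_simps)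
  define s where "s i = (if deg N E i = 0 then B + 1 else (B + \<tau> i / (\<rho> * real (deg N E i))) / 2)" for i
  define \<epsilon> where "\<epsilon> i = 1 / (1 + s i)" for i
  have sB: "s i > B" and st: "\<rho> * s i * real (deg N E i) < \<tau> i" if i: "i \<in> verts N" for i
  proof -
    have "s i > B \<and> \<rho> * s i * real (deg N E i) < \<tau> i"
    proof (cases "deg N E i = 0")
      case True then show ?thesis using taupos[OF i] by (simp add: s_def)
    next
      case False
      then have dpos: "\<rho> * real (deg N E i) > 0" using rho by simp
      have "\<tau> i > B * (\<rho> * real (deg N E i))" using tau2[OF i] unfolding B_def by (simp add: mult_ac)
      then have T: "\<tau> i / (\<rho> * real (deg N E i)) > B" using dpos by (simp add: field_simps)
      have seq: "s i = (B + \<tau> i / (\<rho> * real (deg N E i))) / 2" using False by (simp add: s_def)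
      note seq
      moreover have "\<rho> * ((B + \<tau> i / (\<rho> * real (deg N E i))) / 2) * real (deg N E i)
          = (B * (\<rho> * real (deg N E i)) + \<tau> i) / 2"
      proof -
        define D where "D = \<rho> * real (deg N E i)"
        have D0: "D \<noteq> 0" using dpos unfolding D_def by linarith
        have "\<rho> * ((B + \<tau> i / D) / 2) * real (deg N E i) = (B + \<tau> i / D) * D / 2"
          by (simp add: D_def)
        also have "\<dots> = (B * D + \<tau> i) / 2" using D0 by (simp add: distrib_right)
        finally show ?thesis by (simp add: D_def)
      qed
      ultimately have "\<rho> * s i * real (deg N E i) = (B * (\<rho> * real (deg N E i)) + \<tau> i) / 2"
        by (simp only:)
      then have c2: "\<rho> * s i * real (deg N E i) < \<tau> i"
        using avg_lt \<open>\<tau> i > B * (\<rho> * real (deg N E i))\<close> by blast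
      have c1: "B < s i" using avg_gt T seq by blast
      show ?thesis using c1 c2 by blast
    qed
    then show "s i > B" "\<rho> * s i * real (deg N E i) < \<tau> i" by auto
  qed
  have epsb: "\<epsilon> i < (2 - \<gamma>) / real N" if "i \<in> verts N" for i
  proof -
    have "1 + B = real N / (2 - \<gamma>)" by (simp add: B_def)
    moreover have "1 + s i > 1 + B" using sB[OF that] by simp
    ultimately have lt: "real N / (2 - \<gamma>) < 1 + s i" by simp
    have p1: "0 < real N / (2 - \<gamma>)" using g2 N2 by simp
    have pp: "0 < (1 + s i) * (real N / (2 - \<gamma>))" by (rule mult_pos_pos) (use p1 lt in linarith)+
    have "\<epsilon> i < 1 / (real N / (2 - \<gamma>))" unfolding \<epsilon>_def
      by (rule divide_strict_left_mono[OF lt zero_less_one pp])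
    then show ?thesis using g2 by simp
  qed
  show "\<exists>\<epsilon> :: nat \<Rightarrow> real. (\<forall>i\<in>verts N. 0 < \<epsilon> i \<and> \<epsilon> i < 1)
             \<and> (\<Sum>i\<in>verts N. \<epsilon> i) < 2 - \<gamma>
             \<and> (\<forall>i\<in>verts N. \<tau> i > \<rho> * (1 / \<epsilon> i - 1) * real (deg N E i))"
  proof (intro exI[of _ \<epsilon>] conjI ballI)
    fix i assume i: "i \<in> verts N"
    have sp: "1 + s i > 1" using sB[OF i] Bpos by simp
    show "0 < \<epsilon> i" using sp by (simp add: \<epsilon>_def)
    show "\<epsilon> i < 1" using sp by (simp add: \<epsilon>_def)
    have "1 / \<epsilon> i - 1 = s i" using sp by (simp add: \<epsilon>_def)
    then show "\<tau> i > \<rho> * (1 / \<epsilon> i - 1) * real (deg N E i)" using st[OF i] by simp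
  next
    have ne: "verts N \<noteq> {}" using N2 by (auto simp: verts_def)
    have "(\<Sum>i\<in>verts N. \<epsilon> i) < (\<Sum>i\<in>verts N. (2 - \<gamma>) / real N)"
      by (rule sum_strict_mono) (use ne epsb in auto)
    also have "\<dots> = 2 - \<gamma>" using N2 by (simp add: verts_def)
    finally show "(\<Sum>i\<in>verts N. \<epsilon> i) < 2 - \<gamma>" .
  qed
qed

end
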